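(* For every $n\ge0$, $\phi_n(x)=(x-1)\cdot U^{\mathrm{e}}_n(x)\cdot S_n(x)$.
   Context: $U_n(x)$ is the Chebyshev polynomial of the second kind ($U_n(\cos\theta)=\sin((n+1)\theta)/\sin\theta$), with $U_{-1}=0$. The partial Chebyshev polynomial $U^{\mathrm{e}}_n$ is the polynomial with $U^{\mathrm{e}}_n(\cos\theta)=\frac{\sin((n+1)\theta/2)}{\sin(\theta/2)}$ for even $n$ and $U^{\mathrm{e}}_n(\cos\theta)=\frac{\sin((n+1)\theta/2)}{\sin\theta}$ for odd $n$. Define $\phi_n(x)=((n+1)x^2-3x-n)U_n(x)+(x+1)(U_{n-1}(x)+1)$ and, for $n\ge0$, $S_{2n}(x)=(2nx+x+2n-1)U_n(x)-(2nx+3x+2n+1)U_{n-1}(x)$, $S_{2n+1}(x)=2(2nx^2+2x^2+2nx-x-1)U_n(x)-2(2nx+3x+2n+1)U_{n-1}(x)$. *)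

theory Defs
  imports "HOL-Analysis.Analysis" "HOL-Computational_Algebra.Polynomial"
begin

text \<open>Chebyshev polynomials of the second kind, via the standard recurrence
  (U_0 = 1, U_1 = 2x, U_{k+2} = 2x U_{k+1} - U_k), so that U_k(cos t) = sin((k+1)t)/sin t.\<close>
fun chebU :: "nat \<Rightarrow> real poly" where
  "chebU 0 = 1"
| "chebU (Suc 0) = [:0, 2:]"
| "chebU (Suc (Suc k)) = [:0, 2:] * chebU (Suc k) - chebU k"

definition U :: "nat \<Rightarrow> real \<Rightarrow> real" where
  "U k x = poly (chebU k) x"

definition Uprev :: "nat \<Rightarrow> real \<Rightarrow> real" where
  "Uprev k x = (if k = 0 then 0 else U (k - 1) x)"

definition chebUe :: "nat \<Rightarrow> real poly" where
  "chebUe n = (THE p. \<forall>t::real.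
      let d = (if even n then sin (t / 2) else sin t) in
      d \<noteq> 0 \<longrightarrow> poly p (cos t) = sin ((real n + 1) * t / 2) / d)"

definition Ue :: "nat \<Rightarrow> real \<Rightarrow> real" where
  "Ue n x = poly (chebUe n) x"

definition phi :: "nat \<Rightarrow> real \<Rightarrow> real" where
  "phi n x = ((real n + 1) * x^2 - 3 * x - real n) * U n x + (x + 1) * (Uprev n x + 1)"

definition S :: "nat \<Rightarrow> real \<Rightarrow> real" where
  "S k x = (let m = k div 2; r = real m in
     if even k then
       (2*r*x + x + 2*r - 1) * U m x - (2*r*x + 3*x + 2*r + 1) * Uprev m x
     else
       2 * (2*r*x^2 + 2*x^2 + 2*r*x - x - 1) * U m x
         - 2 * (2*r*x + 3*x + 2*r + 1) * Uprev m x)"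

end

theory Submission
  imports Defs
begin

lemma U0[simp]: "U 0 x = 1" by (simp add: U_def)
lemma U1[simp]: "U (Suc 0) x = 2*x" by (simp add: U_def)
lemma U2[simp]: "U (Suc (Suc k)) x = 2*x*U (Suc k) x - U k x" by (simp add: U_def)
lemma UprevSuc[simp]: "Uprev (Suc k) x = U k x" by (simp add: Uprev_def)
lemma Uprev0[simp]: "Uprev 0 x = 0" by (simp add: Uprev_def)

lemma U_Suc: "U (Suc k) x = 2*x*U k x - Uprev k x"
  by (cases k) auto

lemma U_add: "U (m + k) x = U m x * U k x - Uprev m x * Uprev k x"
proof -
  have "U (m + k) x = U m x * U k x - Uprev m x * Uprev k x \<and>
        U (m + Suc k) x = U m x * U (Suc k) x - Uprev m x * Uprev (Suc k) x" for k
  proof (induction k)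
    case 0 then show ?case by (simp add: U_Suc[of m])
  next
    case (Suc k)
    have "U (m + Suc (Suc k)) x = 2*x*U (m + Suc k) x - U (m+k) x"
      using U2[of "m+k" x] by simp
    note eq = this
    from Suc have h1: "U (m + k) x = U m x * U k x - Uprev m x * Uprev k x"
      and h2: "U (m + Suc k) x = U m x * U (Suc k) x - Uprev m x * U k x" by auto
    have "U (m + Suc (Suc k)) x = U m x * U (Suc (Suc k)) x - Uprev m x * Uprev (Suc (Suc k)) x"
      unfolding eq h1 h2 U2 UprevSuc unfolding U_Suc[of k x] by (simp add: algebra_simps)
    then show ?case using h2 by simp
  qed
  then show ?thesis by blast
qed

lemma cassini: "(U m x)^2 - 2*x*U m x*Uprev m x + (Uprev m x)^2 = 1"
proof (induction m)
  case 0 then show ?case by simp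
next
  case (Suc m)
  then show ?case by (simp add: U_Suc[of m] power2_eq_square algebra_simps)
qed

lemma sin_step: "sin (A + d) = 2 * cos d * sin A - sin (A - (d::real))"
  by (simp add: sin_add sin_diff)

lemma U_trig: "sin t * U k (cos t) = sin ((real k + 1) * t)"
proof -
  have "sin t * U k (cos t) = sin ((real k + 1) * t) \<and>
        sin t * U (Suc k) (cos t) = sin ((real (Suc k) + 1) * t)" for k
  proof (induction k)
    case 0 then show ?case by (simp add: sin_double)
  next
    case (Suc k)
    have "sin ((real (Suc (Suc k)) + 1) * t) = 2 * cos t * sin ((real (Suc k) + 1) * t) - sin ((real k + 1) * t)"
      using sin_step[of "(real (Suc k) + 1) * t" t] by (simp add: algebra_simps)
    then show ?case using Suc by (simp add: algebra_simps)
  qed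
  then show ?thesis by blast
qed

lemma Ue_trig: "sin u * (U m (cos (2*u)) + Uprev m (cos (2*u))) = sin ((2*real m + 1) * u)"
proof -
  have "sin u * (U m (cos (2*u)) + Uprev m (cos (2*u))) = sin ((2*real m + 1) * u) \<and>
        sin u * (U (Suc m) (cos (2*u)) + Uprev (Suc m) (cos (2*u))) = sin ((2*real (Suc m) + 1) * u)" for m
  proof (induction m)
    case 0
    have "sin (3*u) = sin (u + 2*u)" by simp
    also have "\<dots> = sin u * cos (2*u) + cos u * (2 * sin u * cos u)"
      by (simp only: sin_add sin_double)
    also have "\<dots> = sin u * (2 * cos (2*u) + 1)"
      unfolding cos_double_cos by (simp add: algebra_simps power2_eq_square)
    finally show ?case by (simp add: algebra_simps)
  next
    case (Suc m)
    have "sin ((2*real (Suc (Suc m)) + 1) * u) = 2 * cos (2*u) * sin ((2*real (Suc m) + 1) * u) - sin ((2*real m + 1) * u)"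
      using sin_step[of "(2*real (Suc m) + 1) * u" "2*u"] by (simp add: algebra_simps)
    moreover have "U (Suc (Suc m)) (cos (2*u)) + Uprev (Suc (Suc m)) (cos (2*u))
       = 2*cos (2*u) * (U (Suc m) (cos (2*u)) + Uprev (Suc m) (cos (2*u))) - (U m (cos (2*u)) + Uprev m (cos (2*u)))"
      by (simp add: U_Suc[of m] algebra_simps)
    ultimately show ?case
    proof -
      assume A: "sin ((2*real (Suc (Suc m)) + 1) * u) = 2 * cos (2*u) * sin ((2*real (Suc m) + 1) * u) - sin ((2*real m + 1) * u)"
        and B: "U (Suc (Suc m)) (cos (2*u)) + Uprev (Suc (Suc m)) (cos (2*u))
       = 2*cos (2*u) * (U (Suc m) (cos (2*u)) + Uprev (Suc m) (cos (2*u))) - (U m (cos (2*u)) + Uprev m (cos (2*u)))"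
      have "sin u * (U (Suc (Suc m)) (cos (2*u)) + Uprev (Suc (Suc m)) (cos (2*u)))
         = 2*cos (2*u) * (sin u * (U (Suc m) (cos (2*u)) + Uprev (Suc m) (cos (2*u)))) - sin u * (U m (cos (2*u)) + Uprev m (cos (2*u)))"
        unfolding B by (simp add: algebra_simps)
      also have "\<dots> = sin ((2*real (Suc (Suc m)) + 1) * u)"
        unfolding A using Suc by simp
      finally show ?thesis using Suc by simp
    qed
  qed
  then show ?thesis by blast
qed

lemma poly_eq_on_interval:
  fixes p q :: "real poly"
  assumes "\<And>y. -1 < y \<Longrightarrow> y < 1 \<Longrightarrow> poly p y = poly q y"
  shows "p = q"
proof -
  have "{-1<..<1::real} \<subseteq> {y. poly (p - q) y = 0}" using assms by auto
  moreover have "infinite {-1<..<1::real}" by simp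
  ultimately have "infinite {y. poly (p - q) y = 0}" using finite_subset by blast
  then show ?thesis using poly_roots_finite[of "p - q"] by auto
qed

lemma arccos_facts:
  assumes "-1 < y" "y < 1"
  shows "cos (arccos y) = y" "sin (arccos y) \<noteq> 0" "sin (arccos y / 2) \<noteq> 0"
proof -
  show "cos (arccos y) = y" using assms by simp
  have t: "0 < arccos y" "arccos y < pi" using assms arccos_lt_bounded by auto
  show "sin (arccos y) \<noteq> 0" using sin_gt_zero[OF t] by simp
  have "0 < arccos y / 2" "arccos y / 2 < pi" using t by auto
  then show "sin (arccos y / 2) \<noteq> 0" using sin_gt_zero by fastforce
qed

definition Uprevp :: "nat \<Rightarrow> real poly" where
  "Uprevp k = (if k = 0 then 0 else chebU (k - 1))"

lemma poly_Uprevp: "poly (Uprevp k) x = Uprev k x"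
  by (simp add: Uprevp_def Uprev_def U_def)

lemma chebUe_eq:
  assumes "\<forall>t::real. let d = (if even n then sin (t / 2) else sin t) in
      d \<noteq> 0 \<longrightarrow> poly q (cos t) = sin ((real n + 1) * t / 2) / d"
  shows "chebUe n = q"
  unfolding chebUe_def
proof (rule the_equality)
  show "\<forall>t::real. let d = (if even n then sin (t / 2) else sin t) in
      d \<noteq> 0 \<longrightarrow> poly q (cos t) = sin ((real n + 1) * t / 2) / d" by fact
next
  fix p assume p: "\<forall>t::real. let d = (if even n then sin (t / 2) else sin t) in
      d \<noteq> 0 \<longrightarrow> poly p (cos t) = sin ((real n + 1) * t / 2) / d"
  show "p = q"
  proof (rule poly_eq_on_interval)
    fix y :: real assume y: "-1 < y" "y < 1"
    define t where "t = arccos y"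
    have "(if even n then sin (t / 2) else sin t) \<noteq> 0"
      using arccos_facts[OF y] by (simp add: t_def)
    then show "poly p y = poly q y"
      using p[rule_format, of t] assms[rule_format, of t] arccos_facts(1)[OF y]
      by (simp add: Let_def t_def)
  qed
qed

lemma Ue_even: "Ue (2*m) x = U m x + Uprev m x"
proof -
  have "chebUe (2*m) = chebU m + Uprevp m"
  proof (rule chebUe_eq, intro allI)
    fix t :: real
    have e: "sin (t/2) * (U m (cos t) + Uprev m (cos t)) = sin ((2*real m + 1) * (t/2))"
      using Ue_trig[of "t/2" m] by simp
    show "let d = (if even (2*m) then sin (t / 2) else sin t) in
      d \<noteq> 0 \<longrightarrow> poly (chebU m + Uprevp m) (cos t) = sin ((real (2*m) + 1) * t / 2) / d"
      using e by (simp add: Let_def poly_Uprevp U_def[symmetric] field_simps)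
  qed
  then show ?thesis by (simp add: Ue_def poly_Uprevp U_def)
qed

lemma Ue_odd: "Ue (2*m+1) x = U m x"
proof -
  have "chebUe (2*m+1) = chebU m"
  proof (rule chebUe_eq, intro allI)
    fix t :: real
    have e: "sin t * U m (cos t) = sin ((real m + 1) * t)" by (rule U_trig)
    have a: "(real (2*m+1) + 1) * t / 2 = (real m + 1) * t" by (simp add: field_simps)
    show "let d = (if even (2*m+1) then sin (t / 2) else sin t) in
      d \<noteq> 0 \<longrightarrow> poly (chebU m) (cos t) = sin ((real (2*m+1) + 1) * t / 2) / d"
      using e unfolding a by (simp add: Let_def U_def[symmetric] field_simps)
  qed
  then show ?thesis by (simp add: Ue_def U_def)
qed

theorem mainTheorem11:
  fixes n :: nat and x :: real
  shows "phi n x = (x - 1) * Ue n x * S n x"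
proof -
  obtain m where "n = 2*m \<or> n = 2*m+1" by (metis oddE evenE)
  then show ?thesis
  proof
    assume n: "n = 2*m"
    define a where "a = U m x"
    define b where "b = Uprev m x"
    have C: "a^2 - 2*x*a*b + b^2 = 1" using cassini[of m x] by (simp add: a_def b_def)
    have Un: "U n x = a^2 - b^2" using U_add[of m m x] by (simp add: n a_def b_def mult_2 power2_eq_square)
    have Upn: "Uprev n x = 2*a*b - 2*x*b^2"
    proof (cases m)
      case 0 then show ?thesis by (simp add: n b_def)
    next
      case (Suc j)
      have p: "Uprev j x = 2*x*U j x - U (Suc j) x" using U_Suc[of j x] by simp
      have "U (Suc j + j) x = U (Suc j) x * U j x - U j x * (2*x*U j x - U (Suc j) x)"
        using U_add[of "Suc j" j x] unfolding p by simp
      moreover have "Uprev n x = U (Suc j + j) x" using n Suc by (simp add: Uprev_def mult_2)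
      moreover have "a = U (Suc j) x" "b = U j x" using Suc by (simp_all add: a_def b_def)
      ultimately show ?thesis
        by (simp add: power2_eq_square algebra_simps)
    qed
    have Sn: "S n x = (2*real m*x + x + 2*real m - 1) * a - (2*real m*x + 3*x + 2*real m + 1) * b"
      by (simp add: S_def n a_def b_def Let_def)
    have "phi n x = ((real n + 1) * x^2 - 3 * x - real n) * (a^2 - b^2) + (x + 1) * (2*a*b - 2*x*b^2 + (a^2 - 2*x*a*b + b^2))"
      unfolding phi_def Un Upn C ..
    also have "\<dots> = (x - 1) * (a + b) * ((2*real m*x + x + 2*real m - 1) * a - (2*real m*x + 3*x + 2*real m + 1) * b)"
      by (simp add: n power2_eq_square algebra_simps)
    finally show ?thesis unfolding Sn by (simp add: Ue_even n a_def b_def)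
  next
    assume n: "n = 2*m+1"
    define a where "a = U m x"
    define b where "b = Uprev m x"
    have C: "a^2 - 2*x*a*b + b^2 = 1" using cassini[of m x] by (simp add: a_def b_def)
    have Un: "U n x = a*(2*x*a - 2*b)"
    proof -
      have "U (m + Suc m) x = U m x * U (Suc m) x - Uprev m x * Uprev (Suc m) x" by (rule U_add)
      moreover have "U (Suc m) x = 2*x*U m x - Uprev m x" by (rule U_Suc)
      moreover have "n = m + Suc m" using n by simp
      ultimately show ?thesis by (simp add: a_def b_def algebra_simps)
    qed
    have Upn: "Uprev n x = a^2 - b^2" using U_add[of m m x] by (simp add: n a_def b_def mult_2 power2_eq_square)
    have Sn: "S n x = 2 * (2*real m*x^2 + 2*x^2 + 2*real m*x - x - 1) * a - 2 * (2*real m*x + 3*x + 2*real m + 1) * b"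
      by (simp add: S_def n a_def b_def Let_def)
    have "phi n x = ((real n + 1) * x^2 - 3 * x - real n) * (a*(2*x*a - 2*b)) + (x + 1) * (a^2 - b^2 + (a^2 - 2*x*a*b + b^2))"
      unfolding phi_def Un Upn C ..
    also have "\<dots> = (x - 1) * a * (2 * (2*real m*x^2 + 2*x^2 + 2*real m*x - x - 1) * a - 2 * (2*real m*x + 3*x + 2*real m + 1) * b)"
      by (simp add: n power2_eq_square algebra_simps)
    finally have "phi n x = (x - 1) * a * S n x" unfolding Sn .
    then show ?thesis using Ue_odd[of m x] n by (simp add: a_def)
  qed
qed

end
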